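(* Let $\mu$ be a probability measure on $\mathbb{R}$ with density $p$ that is locally absolutely continuous on $\mathbb{R}$, satisfies $p(x)=p(-x)$ for all $x$, $p'(x)\le0$ for almost every $x>0$, and $\lim_{x\to\infty}p(x)\log x=0$. Then $\operatorname{Re}G_\mu(x+yi)>0$ for all $x>0$, $y>0$.
   Context: $G_\mu(z)=\int_{\mathbb{R}}\frac{1}{z-u}\mu(du)$ for $z\in\mathbb{C}^+$ is the Cauchy transform of $\mu$. *)

theory Defs
  imports "HOL-Probability.Probability"
begin

definition ac_on_interval :: "real \<Rightarrow> real \<Rightarrow> (real \<Rightarrow> real) \<Rightarrow> bool" where
  "ac_on_interval a b f \<longleftrightarrow>
     (\<forall>\<epsilon>>0. \<exists>\<delta>>0. \<forall>(n::nat) (l::nat \<Rightarrow> real) (r::nat \<Rightarrow> real).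
        (\<forall>i<n. a \<le> l i \<and> l i < r i \<and> r i \<le> b) \<and>
        (\<forall>i<n. \<forall>j<n. i \<noteq> j \<longrightarrow> r i \<le> l j \<or> r j \<le> l i) \<and>
        (\<Sum>i<n. r i - l i) < \<delta>
        \<longrightarrow> (\<Sum>i<n. \<bar>f (r i) - f (l i)\<bar>) < \<epsilon>)"

definition locally_abs_cont :: "(real \<Rightarrow> real) \<Rightarrow> bool" where
  "locally_abs_cont f \<longleftrightarrow> (\<forall>a b. a \<le> b \<longrightarrow> ac_on_interval a b f)"

definition cauchy_transform :: "real measure \<Rightarrow> complex \<Rightarrow> complex" where
  "cauchy_transform \<mu> z = (LINT u|\<mu>. 1 / (z - complex_of_real u))"

end

theory Submission
  imports Defs
begin


lemma ac_cont:
  assumes ac: "locally_abs_cont p"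
  shows "isCont p x"
proof (rule continuous_at_eps_delta[THEN iffD2], intro allI impI)
  fix e :: real assume e: "e > 0"
  have "ac_on_interval (x - 1) (x + 1) p" using ac unfolding locally_abs_cont_def by auto
  then obtain d where d: "d > 0" and H0: "\<forall>(n::nat) (l::nat \<Rightarrow> real) r.
        (\<forall>i<n. x - 1 \<le> l i \<and> l i < r i \<and> r i \<le> x + 1) \<and>
        (\<forall>i<n. \<forall>j<n. i \<noteq> j \<longrightarrow> r i \<le> l j \<or> r j \<le> l i) \<and>
        (\<Sum>i<n. r i - l i) < d
        \<longrightarrow> (\<Sum>i<n. \<bar>p (r i) - p (l i)\<bar>) < e"
    unfolding ac_on_interval_def using e by blast
  note H = H0[rule_format]
  show "\<exists>d>0. \<forall>y. dist y x < d \<longrightarrow> dist (p y) (p x) < e"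
  proof (intro exI[of _ "min d 1"] conjI allI impI)
    show "min d 1 > 0" using d by simp
    fix y assume y: "dist y x < min d 1"
    show "dist (p y) (p x) < e"
    proof (cases "y = x")
      case True thus ?thesis using e by simp
    next
      case False
      have "(\<Sum>i<(1::nat). \<bar>p ((\<lambda>_. max x y) i) - p ((\<lambda>_. min x y) i)\<bar>) < e"
        by (rule H) (use y False in \<open>auto simp: dist_real_def\<close>)
      thus ?thesis by (auto simp: dist_real_def max_def min_def abs_minus_commute split: if_splits)
    qed
  qed
qed




lemma tdiv_int:
  assumes "P tagged_division_of {a..b::real}" "(x,K) \<in> P"
  shows "K = {Inf K..Sup K} \<and> Inf K \<le> x \<and> x \<le> Sup K \<and> a \<le> Inf K \<and> Sup K \<le> b"
proof -
  obtain u v where K: "K = cbox u v" using tagged_division_ofD(4)[OF assms] by blast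
  have x: "x \<in> K" and sub: "K \<subseteq> {a..b}" using tagged_division_ofD(2,3)[OF assms] by auto
  have K': "K = {u..v}" using K by simp
  have uv: "u \<le> v" using x K' by auto
  have "Inf K = u" "Sup K = v" using uv K' by auto
  thus ?thesis using x sub K' uv by auto
qed

lemma deriv_local:
  fixes p :: "real \<Rightarrow> real"
  assumes "(p has_real_derivative D) (at x)" "D \<le> 0" "\<eta> > 0"
  shows "\<exists>d>0. \<forall>y. \<bar>y - x\<bar> < d \<longrightarrow> (x \<le> y \<longrightarrow> p y - p x \<le> \<eta>*(y-x)) \<and> (y \<le> x \<longrightarrow> p x - p y \<le> \<eta>*(x-y))"
proof -
  have "(p has_derivative (\<lambda>h. D * h)) (at x)" using assms(1) by (simp add: has_field_derivative_def)
  then obtain d where d: "d > 0" and H: "\<forall>y. norm (y - x) < d \<longrightarrow> norm (p y - p x - D * (y - x)) \<le> \<eta> * norm (y - x)"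
    using assms(3) unfolding has_derivative_at_alt by blast
  show ?thesis
  proof (intro exI[of _ d] conjI allI impI)
    show "d > 0" by fact
    fix y assume y: "\<bar>y - x\<bar> < d"
    have h: "\<bar>p y - p x - D * (y - x)\<bar> \<le> \<eta> * \<bar>y - x\<bar>" using H y by auto
    { assume "x \<le> y"
      moreover have "D * (y - x) \<le> 0" using \<open>x \<le> y\<close> assms(2) by (simp add: mult_nonpos_nonneg)
      ultimately show "p y - p x \<le> \<eta>*(y-x)" using h by auto }
    { assume "y \<le> x"
      moreover have "D * (x - y) \<le> 0" using \<open>y \<le> x\<close> assms(2) by (simp add: mult_nonpos_nonneg)
      ultimately show "p x - p y \<le> \<eta>*(x-y)" using h by (auto simp: algebra_simps) }
  qed
qed




lemma mono_step:
  fixes p :: "real \<Rightarrow> real"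
  assumes ac: "locally_abs_cont p"
    and decr: "AE x in lborel. x > 0 \<longrightarrow> (\<exists>D. (p has_real_derivative D) (at x) \<and> D \<le> 0)"
    and ab: "0 \<le> a" "a \<le> b" and eta: "\<eta> > 0" and eps: "\<epsilon> > 0"
  shows "p b - p a \<le> \<eta> * (b - a) + \<epsilon>"
proof -
  obtain N where N: "{x \<in> space lborel. \<not> (x > 0 \<longrightarrow> (\<exists>D. (p has_real_derivative D) (at x) \<and> D \<le> 0))} \<subseteq> N"
      "emeasure lborel N = 0" "N \<in> sets lborel"
    using decr by (rule AE_E)
  define B where "B = insert 0 N"
  have "N \<in> null_sets lebesgue" using N(2,3) by (intro null_sets_completionI) (auto intro: null_setsI)
  hence negB: "negligible B" unfolding B_def by (simp add: negligible_iff_null_sets)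
  have good: "\<exists>d>0. \<forall>y. \<bar>y - x\<bar> < d \<longrightarrow> (x \<le> y \<longrightarrow> p y - p x \<le> \<eta>*(y-x)) \<and> (y \<le> x \<longrightarrow> p x - p y \<le> \<eta>*(x-y))"
    if "x \<in> {a..b} - B" for x
  proof -
    have "x > 0" using that ab unfolding B_def by auto
    moreover have "x \<notin> N" using that unfolding B_def by auto
    ultimately obtain D where "(p has_real_derivative D) (at x)" "D \<le> 0" using N(1) by auto
    thus ?thesis using deriv_local eta by blast
  qed
  then obtain dd where dd: "\<forall>x\<in>{a..b} - B. dd x > 0 \<and> (\<forall>y. \<bar>y - x\<bar> < dd x \<longrightarrow> (x \<le> y \<longrightarrow> p y - p x \<le> \<eta>*(y-x)) \<and> (y \<le> x \<longrightarrow> p x - p y \<le> \<eta>*(x-y)))"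
    using bchoice[of "{a..b} - B"] by (metis (no_types, lifting))
  have "ac_on_interval a b p" using ac ab unfolding locally_abs_cont_def by auto
  then obtain d0 where d0: "d0 > 0" and H0: "\<forall>(n::nat) (l::nat \<Rightarrow> real) r.
        (\<forall>i<n. a \<le> l i \<and> l i < r i \<and> r i \<le> b) \<and>
        (\<forall>i<n. \<forall>j<n. i \<noteq> j \<longrightarrow> r i \<le> l j \<or> r j \<le> l i) \<and>
        (\<Sum>i<n. r i - l i) < d0
        \<longrightarrow> (\<Sum>i<n. \<bar>p (r i) - p (l i)\<bar>) < \<epsilon>"
    unfolding ac_on_interval_def using eps by blast
  note H = H0[rule_format]
  have "((indicator B :: real \<Rightarrow> real) has_integral 0) {a..b}"
    using negB unfolding negligible_def by (metis box_real(2))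
  from has_integral_real[THEN iffD1, rule_format, OF this d0]
  obtain \<gamma>1 where g1: "gauge \<gamma>1" and G1: "\<forall>\<D>. \<D> tagged_division_of {a..b} \<and> \<gamma>1 fine \<D> \<longrightarrow>
        norm (sum (\<lambda>(x,k). Henstock_Kurzweil_Integration.content k *\<^sub>R (indicator B x :: real)) \<D> - 0) < d0"
    by blast
  define \<gamma> where "\<gamma> x = \<gamma>1 x \<inter> ball x (if x \<in> {a..b} - B then dd x else 1)" for x
  have "gauge \<gamma>"
    using g1 dd unfolding gauge_def \<gamma>_def by auto
  then obtain P where P: "P tagged_division_of {a..b}" "\<gamma> fine P"
    by (rule fine_division_exists_real)
  have fine1: "\<gamma>1 fine P" using P(2) unfolding fine_def \<gamma>_def by auto
  have finP: "finite P" using P(1) by auto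
  define F where "F = (\<lambda>(x::real,K::real set). if x \<in> B then \<bar>p (Sup K) - p (Inf K)\<bar> else 0)"
  have trm: "p (Sup K) - p (Inf K) \<le> \<eta> * Henstock_Kurzweil_Integration.content K + F (x,K)" if xK: "(x,K) \<in> P" for x K
  proof -
    have I: "K = {Inf K..Sup K}" "Inf K \<le> x" "x \<le> Sup K" "a \<le> Inf K" "Sup K \<le> b"
      using tdiv_int[OF P(1) xK] by auto
    have c: "Henstock_Kurzweil_Integration.content K = Sup K - Inf K" using I by (metis content_real order_trans)
    show ?thesis
    proof (cases "x \<in> B")
      case True
      have "0 \<le> \<eta> * Henstock_Kurzweil_Integration.content K" using eta by simp
      thus ?thesis using True unfolding F_def by auto
    next
      case False
      hence xg: "x \<in> {a..b} - B" using I by auto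
      have "K \<subseteq> \<gamma> x" using P(2) xK unfolding fine_def by blast
      hence "K \<subseteq> ball x (dd x)" using xg unfolding \<gamma>_def by auto
      moreover have "Inf K \<in> {Inf K..Sup K}" "Sup K \<in> {Inf K..Sup K}" using I(2,3) by auto
      hence "Inf K \<in> K" "Sup K \<in> K" by (metis I(1))+
      ultimately have "Inf K \<in> ball x (dd x)" "Sup K \<in> ball x (dd x)" by blast+
      hence "\<bar>Inf K - x\<bar> < dd x" "\<bar>Sup K - x\<bar> < dd x" by (auto simp: dist_real_def abs_minus_commute)
      hence "p (Sup K) - p x \<le> \<eta>*(Sup K - x)" "p x - p (Inf K) \<le> \<eta>*(x - Inf K)"
        using dd xg I by blast+
      hence "p (Sup K) - p (Inf K) \<le> \<eta> * (Sup K - Inf K)" by (simp add: algebra_simps)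
      thus ?thesis using False c unfolding F_def by simp
    qed
  qed
  have "p b - p a = (\<Sum>(x,K)\<in>P. p (Sup K) - p (Inf K))"
    using additive_tagged_division_1[OF ab(2) P(1), of p] by simp
  also have "\<dots> \<le> (\<Sum>(x,K)\<in>P. \<eta> * Henstock_Kurzweil_Integration.content K + F (x,K))"
    by (rule sum_mono) (use trm in auto)
  also have "\<dots> = \<eta> * (\<Sum>(x,K)\<in>P. Henstock_Kurzweil_Integration.content K) + sum F P"
    by (simp add: sum.distrib sum_distrib_left case_prod_unfold)
  also have "(\<Sum>(x,K)\<in>P. Henstock_Kurzweil_Integration.content K) = b - a"
    using additive_content_tagged_division[of P a b] P(1) ab by simp
  finally have main: "p b - p a \<le> \<eta> * (b - a) + sum F P" .
  define Q where "Q = {(x,K) \<in> P. x \<in> B \<and> Inf K < Sup K}"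
  have QP: "Q \<subseteq> P" unfolding Q_def by auto
  have finQ: "finite Q" using finP QP finite_subset by blast
  have "sum F P = sum F Q"
  proof (rule sum.mono_neutral_right[OF finP QP])
    show "\<forall>i\<in>P - Q. F i = 0"
    proof
      fix i assume i: "i \<in> P - Q"
      obtain x K where xK: "i = (x,K)" by fastforce
      have "Inf K \<le> Sup K" using tdiv_int[OF P(1), of x K] i xK by auto
      thus "F i = 0" using i xK unfolding Q_def F_def by auto
    qed
  qed
  also have "\<dots> = (\<Sum>q\<in>Q. \<bar>p (Sup (snd q)) - p (Inf (snd q))\<bar>)"
    by (rule sum.cong) (auto simp: Q_def F_def)
  finally have sFQ: "sum F P = (\<Sum>q\<in>Q. \<bar>p (Sup (snd q)) - p (Inf (snd q))\<bar>)" .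
  obtain h where h: "bij_betw h {0..<card Q} Q" using ex_bij_betw_nat_finite[OF finQ] by blast
  define n where "n = card Q"
  define l where "l i = Inf (snd (h i))" for i
  define r where "r i = Sup (snd (h i))" for i
  have hQ: "h i \<in> Q" if "i < n" for i using h that unfolding n_def by (auto dest: bij_betwE)
  have QI: "snd q = {Inf (snd q)..Sup (snd q)} \<and> a \<le> Inf (snd q) \<and> Inf (snd q) < Sup (snd q) \<and> Sup (snd q) \<le> b \<and> fst q \<in> B" if "q \<in> Q" for q
    using that tdiv_int[OF P(1), of "fst q" "snd q"] unfolding Q_def by auto
  have c1: "\<forall>i<n. a \<le> l i \<and> l i < r i \<and> r i \<le> b"
    using hQ QI unfolding l_def r_def by blast
  have c2: "\<forall>i<n. \<forall>j<n. i \<noteq> j \<longrightarrow> r i \<le> l j \<or> r j \<le> l i"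
  proof (intro allI impI)
    fix i j assume ij: "i < n" "j < n" "i \<noteq> j"
    have "h i \<noteq> h j" using ij h unfolding n_def bij_betw_def inj_on_def by auto
    hence "interior (snd (h i)) \<inter> interior (snd (h j)) = {}"
      using tagged_division_ofD(5)[OF P(1), of "fst (h i)" "snd (h i)" "fst (h j)" "snd (h j)"]
        hQ[OF ij(1)] hQ[OF ij(2)] QP by auto
    moreover have "snd (h i) = {l i..r i}" "snd (h j) = {l j..r j}" "l i < r i" "l j < r j"
      using QI[OF hQ[OF ij(1)]] QI[OF hQ[OF ij(2)]] unfolding l_def r_def by auto
    ultimately have disj: "{l i<..<r i} \<inter> {l j<..<r j} = {}" by simp
    show "r i \<le> l j \<or> r j \<le> l i"
    proof (rule ccontr)
      assume "\<not> (r i \<le> l j \<or> r j \<le> l i)"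
      hence "(max (l i) (l j) + min (r i) (r j))/2 \<in> {l i<..<r i} \<inter> {l j<..<r j}"
        using \<open>l i < r i\<close> \<open>l j < r j\<close> by (auto simp: max_def min_def)
      thus False using disj by blast
    qed
  qed
  have lessn: "{..<n} = {0..<card Q}" unfolding n_def by auto
  have "(\<Sum>i<n. r i - l i) = (\<Sum>q\<in>Q. Sup (snd q) - Inf (snd q))"
    unfolding lessn l_def r_def using sum.reindex_bij_betw[OF h, of "\<lambda>q. Sup (snd q) - Inf (snd q)"] by simp
  also have "\<dots> = (\<Sum>q\<in>Q. Henstock_Kurzweil_Integration.content (snd q) * indicator B (fst q))"
  proof (rule sum.cong[OF refl])
    fix q assume "q \<in> Q"
    hence q: "snd q = {Inf (snd q)..Sup (snd q)}" "Inf (snd q) < Sup (snd q)" "fst q \<in> B" using QI by auto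
    have "Henstock_Kurzweil_Integration.content (snd q) = Sup (snd q) - Inf (snd q)"
      using q(1,2) by (metis content_real less_imp_le)
    thus "Sup (snd q) - Inf (snd q) = Henstock_Kurzweil_Integration.content (snd q) * indicator B (fst q)"
      using q(3) by simp
  qed
  also have "\<dots> \<le> (\<Sum>q\<in>P. Henstock_Kurzweil_Integration.content (snd q) * indicator B (fst q))"
    by (rule sum_mono2[OF finP QP]) auto
  also have "\<dots> = (\<Sum>(x,k)\<in>P. Henstock_Kurzweil_Integration.content k *\<^sub>R (indicator B x :: real))"
    by (simp add: case_prod_unfold)
  also have "\<dots> < d0" using G1 P(1) fine1 by auto
  finally have c3: "(\<Sum>i<n. r i - l i) < d0" .
  have "(\<Sum>i<n. \<bar>p (r i) - p (l i)\<bar>) < \<epsilon>" using H c1 c2 c3 by blast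
  moreover have "(\<Sum>i<n. \<bar>p (r i) - p (l i)\<bar>) = sum F P"
    unfolding sFQ lessn l_def r_def using sum.reindex_bij_betw[OF h, of "\<lambda>q. \<bar>p (Sup (snd q)) - p (Inf (snd q))\<bar>"] by simp
  ultimately show ?thesis using main by simp
qed




lemma ac_mono:
  fixes p :: "real \<Rightarrow> real"
  assumes ac: "locally_abs_cont p"
    and decr: "AE x in lborel. x > 0 \<longrightarrow> (\<exists>D. (p has_real_derivative D) (at x) \<and> D \<le> 0)"
    and ab: "0 \<le> a" "a \<le> b"
  shows "p b \<le> p a"
proof (rule ccontr)
  assume "\<not> p b \<le> p a"
  define d where "d = p b - p a"
  have d: "d > 0" using \<open>\<not> p b \<le> p a\<close> d_def by simp
  define \<eta> where "\<eta> = d / (2 * (b - a + 1))"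
  have eta: "\<eta> > 0" using d ab by (simp add: \<eta>_def)
  have "p b - p a \<le> \<eta> * (b - a) + d/2"
    using mono_step[OF ac decr ab eta, of "d/2"] d by simp
  moreover have "\<eta> * (b - a + 1) = d/2" using ab by (simp add: \<eta>_def field_simps)
  moreover have "\<eta> * (b - a + 1) = \<eta> * (b - a) + \<eta>" by (simp add: algebra_simps)
  ultimately show False using eta d_def by linarith
qed

lemma k_bound:
  fixes s y :: real assumes y: "y > 0"
  shows "\<bar>s / (s^2 + y^2)\<bar> \<le> 1 / y"
proof -
  have pos: "s^2 + y^2 > 0" using y by (simp add: add_nonneg_pos)
  have "\<bar>s\<bar> * y \<le> s^2 + y^2"
  proof -
    have "0 \<le> (\<bar>s\<bar> - y)^2" by simp
    hence "2 * \<bar>s\<bar> * y \<le> s^2 + y^2" by (simp add: power2_eq_square algebra_simps)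
    moreover have "0 \<le> \<bar>s\<bar> * y" using y by simp
    ultimately show ?thesis by linarith
  qed
  thus ?thesis using pos y by (simp add: abs_div field_simps)
qed




theorem lemma3:
  fixes p :: "real \<Rightarrow> real" and \<mu> :: "real measure"
  assumes mu_def: "\<mu> = density lborel (\<lambda>x. ennreal (p x))"
    and prob: "prob_space \<mu>"
    and nonneg: "\<And>x. p x \<ge> 0"
    and meas: "p \<in> borel_measurable borel"
    and ac: "locally_abs_cont p"
    and symm: "\<And>x. p x = p (- x)"
    and decr: "AE x in lborel. x > 0 \<longrightarrow>
                 (\<exists>D. (p has_real_derivative D) (at x) \<and> D \<le> 0)"
    and tail: "((\<lambda>x. p x * ln x) \<longlongrightarrow> 0) at_top"
  shows "\<forall>x>0. \<forall>y>0. Re (cauchy_transform \<mu> (Complex x y)) > 0"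
proof (intro allI impI)
  fix x y :: real assume x: "x > 0" and y: "y > 0"
  note pm[measurable] = meas
  have pc: "continuous_on UNIV p" using ac_cont[OF ac] by (simp add: continuous_at_imp_continuous_on)
  have pabs: "p t = p \<bar>t\<bar>" for t using symm[of t] by (cases "t \<ge> 0") auto
  have monabs: "p t \<le> p s" if "\<bar>s\<bar> \<le> \<bar>t\<bar>" for s t
    using ac_mono[OF ac decr _ that] pabs[of s] pabs[of t] by simp
  have p0: "(p \<longlongrightarrow> 0) at_top"
  proof (rule tendsto_sandwich[OF _ _ tendsto_const tail])
    show "\<forall>\<^sub>F t in at_top. 0 \<le> p t" using nonneg by simp
    have "\<forall>\<^sub>F t in at_top. exp 1 \<le> (t::real)" using eventually_ge_at_top[of "exp 1"] by simp
    thus "\<forall>\<^sub>F t in at_top. p t \<le> p t * ln t"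
    proof (rule eventually_mono)
      fix t :: real assume "exp 1 \<le> t"
      hence "1 \<le> ln t" by (metis exp_gt_zero ln_exp ln_le_cancel_iff order_less_le_trans)
      thus "p t \<le> p t * ln t" using nonneg[of t] by (metis mult_left_mono mult.right_neutral)
    qed
  qed
  have nn1: "(\<integral>\<^sup>+ t. ennreal (p t) \<partial>lborel) = 1"
  proof -
    have "emeasure \<mu> (space \<mu>) = 1" using prob by (simp add: prob_space.emeasure_space_1)
    moreover have "space \<mu> = UNIV" unfolding mu_def by simp
    ultimately show ?thesis unfolding mu_def by (simp add: emeasure_density)
  qed
  have pint: "integrable lborel p"
    by (rule integrableI_nonneg) (use nonneg nn1 in auto)
  have pos0: "p 0 > 0"
  proof (rule ccontr)
    assume "\<not> p 0 > 0"
    hence "p t = 0" for t using monabs[of 0 t] nonneg[of t] by simp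
    hence "(\<integral>\<^sup>+ t. ennreal (p t) \<partial>lborel) = 0" by simp
    thus False using nn1 by simp
  qed
  obtain j :: nat where j: "p (2 * real j * x) > p (2 * (real j + 1) * x)"
  proof (rule ccontr)
    assume "\<not> thesis"
    have H: "p (2 * (real j + 1) * x) \<ge> p (2 * real j * x)" for j :: nat
      using that[of j] \<open>\<not> thesis\<close> by (meson linorder_not_le)
    have ge: "p (2 * real j * x) \<ge> p 0" for j :: nat
    proof (induction j)
      case 0 thus ?case by simp
    next
      case (Suc j) thus ?case using H[of j] by (simp add: add.commute)
    qed
    have "filterlim (\<lambda>j::nat. (2 * x) * real j) at_top sequentially"
      using x by (intro filterlim_tendsto_pos_mult_at_top[OF tendsto_const] filterlim_real_sequentially) auto
    moreover have "(\<lambda>j::nat. 2 * real j * x) = (\<lambda>j. (2 * x) * real j)" by (auto simp: fun_eq_iff)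
    ultimately have "filterlim (\<lambda>j::nat. 2 * real j * x) at_top sequentially" by simp
    hence lim: "(\<lambda>j::nat. p (2 * real j * x)) \<longlonglongrightarrow> 0" by (rule filterlim_compose[OF p0])
    have "p 0 \<le> 0" by (rule tendsto_lowerbound[OF lim]) (use ge in auto)
    thus False using pos0 by simp
  qed
  define k where "k s = s / (s^2 + y^2)" for s
  have kb: "\<bar>k s\<bar> \<le> 1 / y" for s unfolding k_def using k_bound[OF y] .
  have kpos: "k s \<ge> 0 \<longleftrightarrow> s \<ge> 0" for s
  proof -
    have "s^2 + y^2 > 0" using y by (simp add: add_nonneg_pos)
    thus ?thesis unfolding k_def by (simp add: zero_le_divide_iff)
  qed
  have kneg: "k (- s) = - k s" for s unfolding k_def by simp
  have kc: "continuous_on UNIV k"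
  proof -
    have "\<forall>s. s^2 + y^2 \<noteq> 0" using y by (metis add_nonneg_pos less_irrefl zero_le_power2 zero_less_power2)
    thus ?thesis unfolding k_def by (intro continuous_intros) auto
  qed
  note km[measurable] = borel_measurable_continuous_onI[OF kc]
  define z where "z = Complex x y"
  have Ref: "Re (1 / (z - complex_of_real u)) = k (x - u)" for u
    unfolding z_def k_def by (simp add: Re_divide power2_eq_square)
  have fm[measurable]: "(\<lambda>u. 1 / (z - complex_of_real u)) \<in> borel_measurable borel" by measurable
  interpret P: prob_space \<mu> by (rule prob)
  have fint: "integrable \<mu> (\<lambda>u. 1 / (z - complex_of_real u))"
  proof (rule P.integrable_const_bound[where B="1/y"])
    show "AE u in \<mu>. norm (1 / (z - complex_of_real u)) \<le> 1 / y"
    proof (rule AE_I2)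
      fix u
      have "y \<le> norm (z - complex_of_real u)"
        using abs_Im_le_cmod[of "z - complex_of_real u"] y unfolding z_def by simp
      thus "norm (1 / (z - complex_of_real u)) \<le> 1 / y"
        using y by (simp add: norm_divide divide_simps)
    qed
    show "(\<lambda>u. 1 / (z - complex_of_real u)) \<in> borel_measurable \<mu>" unfolding mu_def by simp
  qed
  have "Re (cauchy_transform \<mu> z) = (LINT u|\<mu>. Re (1 / (z - complex_of_real u)))"
    unfolding cauchy_transform_def using fint by simp
  also have "\<dots> = (LINT u|\<mu>. k (x - u))" by (simp add: Ref)
  also have "\<dots> = (LINT u|lborel. p u * k (x - u))"
    unfolding mu_def by (subst integral_density) (use nonneg in auto)
  finally have RI: "Re (cauchy_transform \<mu> z) = (LINT u|lborel. p u * k (x - u))" .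
  define h where "h s = p (x - s) * k s" for s
  have "(LINT u|lborel. p u * k (x - u)) = (LINT s|lborel. h s)"
    using lborel_integral_real_affine[of "-1" "\<lambda>u. p u * k (x - u)" x] by (simp add: h_def)
  note I1 = this
  have I2: "(LINT s|lborel. h s) = (LINT s|lborel. h (- s))"
    using lborel_integral_real_affine[of "-1" h 0] by simp
  have pxint: "integrable lborel (\<lambda>s. p (x - s))"
    using lborel_integrable_real_affine_iff[of "-1" p x] pint by simp
  have hm[measurable]: "h \<in> borel_measurable borel" unfolding h_def by measurable
  have hint: "integrable lborel h"
  proof (rule Bochner_Integration.integrable_bound[OF integrable_divide[OF pxint, of y]])
    show "h \<in> borel_measurable lborel" by simp
    show "AE s in lborel. norm (h s) \<le> norm (p (x - s) / y)"
    proof (rule AE_I2)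
      fix s
      have "\<bar>h s\<bar> = p (x - s) * \<bar>k s\<bar>" unfolding h_def using nonneg by (simp add: abs_mult)
      also have "\<dots> \<le> p (x - s) * (1/y)" using kb nonneg by (intro mult_left_mono) auto
      finally show "norm (h s) \<le> norm (p (x - s) / y)" using nonneg[of "x - s"] y by simp
    qed
  qed
  have hint2: "integrable lborel (\<lambda>s. h (- s))"
    using lborel_integrable_real_affine_iff[of "-1" h 0] hint by simp
  define g where "g s = k s * (p (x - s) - p (x + s))" for s
  have hg: "h s + h (- s) = g s" for s unfolding h_def g_def kneg by (simp add: algebra_simps)
  have gint: "integrable lborel g"
    using Bochner_Integration.integrable_add[OF hint hint2] by (simp add: hg)
  have two: "2 * (LINT s|lborel. h s) = (LINT s|lborel. g s)"
  proof -
    have "(LINT s|lborel. g s) = (LINT s|lborel. h s + h (- s))" by (simp add: hg)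
    also have "\<dots> = (LINT s|lborel. h s) + (LINT s|lborel. h (- s))"
      by (rule Bochner_Integration.integral_add[OF hint hint2])
    finally show ?thesis using I2 by simp
  qed
  have gnn: "g s \<ge> 0" for s
  proof (cases "s \<ge> 0")
    case True
    have "p (x + s) \<le> p (x - s)" using True x by (intro monabs) auto
    moreover have "k s \<ge> 0" using True kpos by simp
    ultimately show ?thesis unfolding g_def by simp
  next
    case False
    have "p (x - s) \<le> p (x + s)" using False x by (intro monabs) auto
    moreover have "k s \<le> 0" using False kpos[of s] by simp
    ultimately show ?thesis unfolding g_def by (simp add: mult_nonpos_nonpos)
  qed
  define s0 where "s0 = (2 * real j + 1) * x"
  have gs0: "g s0 > 0"
  proof -
    have "s0 > 0" using x unfolding s0_def by simp
    moreover have "s0^2 + y^2 > 0" using y by (simp add: add_nonneg_pos)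
    ultimately have "k s0 > 0" unfolding k_def by (rule divide_pos_pos)
    moreover have "p (x - s0) = p (2 * real j * x)" using symm[of "x - s0"] unfolding s0_def by (simp add: algebra_simps)
    moreover have "p (x + s0) = p (2 * (real j + 1) * x)" unfolding s0_def by (simp add: algebra_simps)
    ultimately show ?thesis using j unfolding g_def by simp
  qed
  have gc: "continuous_on UNIV g"
  proof -
    have "continuous_on UNIV (\<lambda>s. p (x - s))" by (rule continuous_on_compose2[OF pc]) (auto intro: continuous_intros)
    moreover have "continuous_on UNIV (\<lambda>s. p (x + s))" by (rule continuous_on_compose2[OF pc]) (auto intro: continuous_intros)
    ultimately show ?thesis unfolding g_def using kc by (intro continuous_intros) auto
  qed
  have gI: "(LINT s|lborel. g s) > 0"
  proof -
    have "(LINT s|lborel. g s) \<ge> 0" using gnn by simp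
    moreover have "(LINT s|lborel. g s) \<noteq> 0"
    proof
      assume "(LINT s|lborel. g s) = 0"
      hence ae: "AE s in lborel. g s = 0"
        using integral_nonneg_eq_0_iff_AE[OF gint] gnn by simp
      have "isCont g s0" using gc by (simp add: continuous_on_eq_continuous_at)
      then obtain r where r: "r > 0" "\<forall>s. dist s s0 < r \<longrightarrow> dist (g s) (g s0) < g s0"
        using gs0 unfolding continuous_at_eps_delta by blast
      obtain N where N: "{s \<in> space lborel. \<not> g s = 0} \<subseteq> N" "emeasure lborel N = 0" "N \<in> sets lborel"
        using ae by (rule AE_E)
      have "{s0 - r <..< s0 + r} \<subseteq> N"
      proof
        fix s assume "s \<in> {s0 - r <..< s0 + r}"
        hence "dist s s0 < r" by (auto simp: dist_real_def)
        hence "g s \<noteq> 0" using r(2) by (auto simp: dist_real_def)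
        thus "s \<in> N" using N(1) by auto
      qed
      hence "emeasure lborel {s0 - r <..< s0 + r} \<le> emeasure lborel N"
        by (rule emeasure_mono) (use N in auto)
      thus False using N(2) r(1) by simp
    qed
    ultimately show ?thesis by simp
  qed
  show "Re (cauchy_transform \<mu> (Complex x y)) > 0"
    using RI I1 two gI unfolding z_def by simp
qed


end
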